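(* Let $\sigma=\langle\mathcal V,\mathcal C,S,B\rangle$ be an approval-based multi-winner election. Fix any run of ODH on $\sigma$ (any tie-breaking), and for $i=0,\dots,S-1$ let $\mathcal C_e^i$ be the set of the first $i$ candidates it chooses ($\mathcal C_e^0=\emptyset$). Let $c\in\mathcal C\setminus\mathcal C_e^i$, and let $\{y_1,\dots,y_n\}\subseteq2^{\mathcal C}$ be such that $c\in y_j$ for every $j=1,\dots,n$. Then $$\mathrm{maxMin}(\sigma,\mathcal C_e^i\cup\{c\})\ \ge\ \frac{\sum_{j=1}^nB(y_j)}{\big|\mathcal C_e^i\cap\bigcup_{j=1}^ny_j\big|+1}.$$
   Context: An approval-based multi-winner election is a tuple $\sigma=\langle \mathcal V,\mathcal C,S,B\rangle$, where $\mathcal V$ is a finite set of agents, $\mathcal C$ is a finite set of candidates, $1\le S\le|\mathcal C|$ is an integer, and $B:2^{\mathcal C}\to\mathbb N$ gives, for each $\mathcal A\subseteq\mathcal C$, the number $B(\mathcal A)$ of agents whose ballot is exactly $\mathcal A$ (with $\sum_{\mathcal A}B(\mathcal A)\le|\mathcal V|$). For a non-empty $\mathcal A\subseteq\mathcal C$, the family $\mathfrak F_{\sigma,\mathcal A}$ is the set of all $F:2^{\mathcal C}\times\mathcal A\to\mathbb R$ such that: - $F(y,c)\ge0$ for all $y$ and $c$; - $F(y,c)=0$ if $c\notin y$; - $\sum_{c\in\mathcal A\cap y}F(y,c)=B(y)$ whenever $y\cap\mathcal A\neq\emptyset$. We write $\mathrm{Supp}_F(c)=\sum_yF(y,c)$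 and $\mathrm{maxMin}(\sigma,\mathcal A)=\sup_{F\in\mathfrak F_{\sigma,\mathcal A}}\min_{c\in\mathcal A}\mathrm{Supp}_F(c)$. We also write $\mathfrak F^{\mathrm{opt}}_{\sigma,\mathcal A}=\{F\in\mathfrak F_{\sigma,\mathcal A}:\mathrm{Supp}_F(c)\ge\mathrm{maxMin}(\sigma,\mathcal A)\ \forall c\in\mathcal A\}$. The Open D'Hondt (ODH) rule proceeds as follows. Start with $\mathcal C_e=\emptyset$ and repeat $S$ times: - for each $c\in\mathcal C\setminus\mathcal C_e$, choose any $F\in\mathfrak F^{\mathrm{opt}}_{\sigma,\mathcal C_e\cup\{c\}}$ and set $s_c=\mathrm{Supp}_F(c)$; - then add to $\mathcal C_e$ some $w$ maximizing $s_w$ (ties broken arbitrarily). Finally, output $\mathcal C_e$. *)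

theory Defs
  imports Complex_Main
begin

text \<open>An approval-based multi-winner election: agents V, candidates C, committee size S,
  and B A = number of agents whose ballot is exactly A (for A a subset of C).\<close>
definition election :: "'v set \<Rightarrow> 'c set \<Rightarrow> nat \<Rightarrow> ('c set \<Rightarrow> nat) \<Rightarrow> bool" where
  "election V C S B \<longleftrightarrow> finite V \<and> finite C \<and> 1 \<le> S \<and> S \<le> card C \<and>
     (\<Sum>A\<in>Pow C. B A) \<le> card V"

text \<open>The family F_{sigma,A}: functions on 2^C x A (values outside are irrelevant).\<close>
definition Fam :: "'c set \<Rightarrow> ('c set \<Rightarrow> nat) \<Rightarrow> 'c set \<Rightarrow> ('c set \<Rightarrow> 'c \<Rightarrow> real) set" where
  "Fam C B A = {F. (\<forall>y\<in>Pow C. \<forall>c\<in>A. F y c \<ge> 0) \<and>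
                  (\<forall>y\<in>Pow C. \<forall>c\<in>A. c \<notin> y \<longrightarrow> F y c = 0) \<and>
                  (\<forall>y\<in>Pow C. y \<inter> A \<noteq> {} \<longrightarrow> (\<Sum>c\<in>A \<inter> y. F y c) = real (B y))}"

definition Supp :: "'c set \<Rightarrow> ('c set \<Rightarrow> 'c \<Rightarrow> real) \<Rightarrow> 'c \<Rightarrow> real" where
  "Supp C F c = (\<Sum>y\<in>Pow C. F y c)"

definition maxMin :: "'c set \<Rightarrow> ('c set \<Rightarrow> nat) \<Rightarrow> 'c set \<Rightarrow> real" where
  "maxMin C B A = (SUP F\<in>Fam C B A. Min (Supp C F ` A))"

definition FamOpt :: "'c set \<Rightarrow> ('c set \<Rightarrow> nat) \<Rightarrow> 'c set \<Rightarrow> ('c set \<Rightarrow> 'c \<Rightarrow> real) set" where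
  "FamOpt C B A = {F\<in>Fam C B A. \<forall>c\<in>A. Supp C F c \<ge> maxMin C B A}"

definition ODH_run :: "'c set \<Rightarrow> nat \<Rightarrow> ('c set \<Rightarrow> nat) \<Rightarrow> 'c list \<Rightarrow> bool" where
  "ODH_run C S B ws \<longleftrightarrow> length ws = S \<and>
     (\<forall>i<S. let Ce = set (take i ws) in
        ws ! i \<in> C - Ce \<and>
        (\<exists>s :: 'c \<Rightarrow> real.
           (\<forall>c\<in>C - Ce. \<exists>F\<in>FamOpt C B (Ce \<union> {c}). s c = Supp C F c) \<and>
           (\<forall>c\<in>C - Ce. s c \<le> s (ws ! i))))"

end

theory Submission
  imports Defs
begin


lemma sum_upd_real:
  fixes f :: "'a \<Rightarrow> real"
  assumes "finite S"
  shows "sum (f(a:=v)) S = (if a \<in> S then sum f S - f a + v else sum f S)"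
proof (cases "a \<in> S")
  case True
  have "sum (f(a:=v)) S = (f(a:=v)) a + sum (f(a:=v)) (S - {a})"
    by (rule sum.remove[OF assms True])
  also have "sum (f(a:=v)) (S - {a}) = sum f (S - {a})" by (rule sum.cong) auto
  also have "sum f (S - {a}) = sum f S - f a" using sum.remove[OF assms True, of f] by simp
  finally show ?thesis using True by simp
next
  case False
  have "sum (f(a:=v)) S = sum f S" by (rule sum.cong) (use False in auto)
  then show ?thesis using False by simp
qed

definition NN :: "'c set \<Rightarrow> ('c set \<Rightarrow> real) \<Rightarrow> 'c set \<Rightarrow> real" where
  "NN C b X = (\<Sum>y\<in>{y\<in>Pow C. y \<inter> X \<noteq> {}}. b y)"

definition feas :: "'c set \<Rightarrow> ('c set \<Rightarrow> real) \<Rightarrow> 'c set \<Rightarrow> ('c set \<Rightarrow> 'c \<Rightarrow> real) \<Rightarrow> bool" where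
  "feas C b A F \<longleftrightarrow> (\<forall>y\<in>Pow C. \<forall>c\<in>A. F y c \<ge> 0) \<and>
                  (\<forall>y\<in>Pow C. \<forall>c\<in>A. c \<notin> y \<longrightarrow> F y c = 0) \<and>
                  (\<forall>y\<in>Pow C. y \<inter> A \<noteq> {} \<longrightarrow> (\<Sum>c\<in>A \<inter> y. F y c) = b y)"

definition OK :: "'c set \<Rightarrow> ('c set \<Rightarrow> real) \<Rightarrow> ('c \<Rightarrow> real) \<Rightarrow> 'c set \<Rightarrow> bool" where
  "OK C b d A \<longleftrightarrow> A \<subseteq> C \<and> (\<forall>y. 0 \<le> b y) \<and> (\<forall>x. 0 \<le> d x) \<and> (\<forall>X\<subseteq>A. sum d X \<le> NN C b X)"

definition SOL :: "'c set \<Rightarrow> ('c set \<Rightarrow> real) \<Rightarrow> ('c \<Rightarrow> real) \<Rightarrow> 'c set \<Rightarrow> bool" where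
  "SOL C b d A \<longleftrightarrow> (\<exists>F. feas C b A F \<and> (\<forall>x\<in>A. d x \<le> Supp C F x))"

definition meas :: "'c set \<Rightarrow> ('c set \<Rightarrow> real) \<Rightarrow> ('c \<Rightarrow> real) \<Rightarrow> 'c set \<Rightarrow> nat" where
  "meas C b d A = card A + card {x\<in>A. 0 < d x} + card {y\<in>Pow C. 0 < b y \<and> y \<inter> A \<noteq> {}}"

lemma feas_triv:
  assumes "finite C" "\<forall>y. 0 \<le> b y"
  shows "\<exists>F. feas C b A F"
proof -
  define g where "g = (\<lambda>y. SOME z. z \<in> A \<inter> y)"
  define F where "F = (\<lambda>y x. if x \<in> y \<and> x = g y then b y else (0::real))"
  have "feas C b A F"
    unfolding feas_def
  proof (intro conjI ballI impI)
    fix y c assume "y \<in> Pow C" "c \<in> A" show "0 \<le> F y c" using assms(2) by (simp add: F_def)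
  next
    fix y c assume "y \<in> Pow C" "c \<in> A" "c \<notin> y"
    then show "F y c = 0" by (simp add: F_def)
  next
    fix y assume y: "y \<in> Pow C" "y \<inter> A \<noteq> {}"
    have fy: "finite y" using y(1) assms(1) by (simp add: finite_subset)
    have fin: "finite (A \<inter> y)" using fy by simp
    have ex: "\<exists>z. z \<in> A \<inter> y" using y(2) by blast
    have mem: "g y \<in> A \<inter> y" unfolding g_def using someI_ex[OF ex] .
    have "(\<Sum>c\<in>A \<inter> y. F y c) = (\<Sum>c\<in>A \<inter> y. if c = g y then b y else 0)"
    proof (rule sum.cong)
      fix c assume "c \<in> A \<inter> y"
      then have "c \<in> y" by blast
      then show "F y c = (if c = g y then b y else 0)" unfolding F_def by simp
    qed simp
    also have "\<dots> = b y" using sum.delta[OF fin, of "g y" "\<lambda>_. b y"] mem by simp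
    finally show "(\<Sum>c\<in>A \<inter> y. F y c) = b y" .
  qed
  then show ?thesis by auto
qed

lemma Supp_nonneg: "feas C b A F \<Longrightarrow> x \<in> A \<Longrightarrow> 0 \<le> Supp C F x"
  unfolding Supp_def feas_def by (auto intro!: sum_nonneg)

lemma NN_empty[simp]: "NN C b {} = 0" by (simp add: NN_def)

lemma NN_split:
  assumes "finite C" "Z \<inter> X = {}"
  shows "NN C b (Z \<union> X) = NN C b X + NN C (\<lambda>y. if y \<inter> X = {} then b y else 0) Z"
proof -
  have fin: "finite {y\<in>Pow C. y \<inter> (Z \<union> X) \<noteq> {}}" using assms(1) by simp
  have eq: "{y\<in>Pow C. y \<inter> (Z \<union> X) \<noteq> {}} = {y\<in>Pow C. y \<inter> X \<noteq> {}} \<union> {y\<in>Pow C. y \<inter> Z \<noteq> {} \<and> y \<inter> X = {}}" by blast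
  have "NN C b (Z \<union> X) = NN C b X + (\<Sum>y\<in>{y\<in>Pow C. y \<inter> Z \<noteq> {} \<and> y \<inter> X = {}}. b y)"
    unfolding NN_def eq using assms(1) by (subst sum.union_disjoint) auto
  moreover have "(\<Sum>y\<in>{y\<in>Pow C. y \<inter> Z \<noteq> {} \<and> y \<inter> X = {}}. b y) = NN C (\<lambda>y. if y \<inter> X = {} then b y else 0) Z"
    unfolding NN_def using assms(1) by (simp add: sum.If_cases, intro sum.cong) auto
  ultimately show ?thesis by simp
qed

lemma NN_restrict:
  assumes "Z \<subseteq> X"
  shows "NN C (\<lambda>y. if y \<inter> X \<noteq> {} then b y else 0) Z = NN C b Z"
  unfolding NN_def by (rule sum.cong) (use assms in auto)

lemma split_case:
  assumes fin: "finite C" and ok: "OK C b d A" and X: "X \<subseteq> A" "X \<noteq> {}" "X \<noteq> A"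
    and tight: "sum d X = NN C b X"
    and IH: "\<And>b' d' A'. OK C b' d' A' \<Longrightarrow> meas C b' d' A' < meas C b d A \<Longrightarrow> SOL C b' d' A'"
  shows "SOL C b d A"
proof -
  define b1 where "b1 = (\<lambda>y. if y \<inter> X \<noteq> {} then b y else 0)"
  define b2 where "b2 = (\<lambda>y. if y \<inter> X = {} then b y else 0)"
  have AC: "A \<subseteq> C" and bnn: "\<forall>y. 0 \<le> b y" and dnn: "\<forall>x. 0 \<le> d x"
    and hall: "\<forall>Z\<subseteq>A. sum d Z \<le> NN C b Z" using ok by (auto simp: OK_def)
  have finA: "finite A" using AC fin finite_subset by blast
  have finX: "finite X" using X(1) finA finite_subset by blast
  have ok1: "OK C b1 d X"
    unfolding OK_def
  proof (intro conjI allI impI)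
    show "X \<subseteq> C" using X AC by blast
    fix y show "0 \<le> b1 y" using bnn by (simp add: b1_def)
  next
    fix x show "0 \<le> d x" using dnn by simp
  next
    fix Z assume ZX: "Z \<subseteq> X"
    have e: "NN C b1 Z = NN C b Z" unfolding b1_def by (rule NN_restrict[OF ZX])
    have "Z \<subseteq> A" using ZX X(1) by (rule subset_trans)
    then have "sum d Z \<le> NN C b Z" by (rule hall[rule_format])
    then show "sum d Z \<le> NN C b1 Z" using e by simp
  qed
  have ok2: "OK C b2 d (A - X)"
    unfolding OK_def
  proof (intro conjI allI impI)
    show "A - X \<subseteq> C" using AC by blast
    fix y show "0 \<le> b2 y" using bnn by (simp add: b2_def)
  next
    fix x show "0 \<le> d x" using dnn by simp
  next
    fix Z assume Z: "Z \<subseteq> A - X"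
    have disj: "Z \<inter> X = {}" using Z by blast
    have finZ: "finite Z" using Z finA finite_subset by blast
    have "NN C b (Z \<union> X) = NN C b X + NN C b2 Z" unfolding b2_def by (rule NN_split[OF fin disj])
    moreover have "sum d (Z \<union> X) = sum d Z + sum d X" using finZ finX disj by (simp add: sum.union_disjoint)
    moreover have "Z \<union> X \<subseteq> A" using Z X(1) by blast
    then have "sum d (Z \<union> X) \<le> NN C b (Z \<union> X)" by (rule hall[rule_format])
    ultimately show "sum d Z \<le> NN C b2 Z" using tight by linarith
  qed
  have finB: "finite {y\<in>Pow C. 0 < b y \<and> y \<inter> A \<noteq> {}}" using fin by simp
  have m1: "meas C b1 d X < meas C b d A"
  proof -
    have "card X < card A" using X finA by (simp add: psubset_card_mono psubset_eq)
    moreover have "card {x\<in>X. 0 < d x} \<le> card {x\<in>A. 0 < d x}" using X finA by (intro card_mono) auto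
    moreover have "card {y\<in>Pow C. 0 < b1 y \<and> y \<inter> X \<noteq> {}} \<le> card {y\<in>Pow C. 0 < b y \<and> y \<inter> A \<noteq> {}}"
      using finB X(1) by (intro card_mono) (auto simp: b1_def split: if_splits)
    ultimately show ?thesis unfolding meas_def by linarith
  qed
  have m2: "meas C b2 d (A - X) < meas C b d A"
  proof -
    have "card (A - X) < card A" proof (rule psubset_card_mono[OF finA])
      obtain x where "x \<in> X" using X(2) by blast
      then show "A - X \<subset> A" using X(1) by auto
    qed
    moreover have "card {x\<in>A - X. 0 < d x} \<le> card {x\<in>A. 0 < d x}" using finA by (intro card_mono) auto
    moreover have "card {y\<in>Pow C. 0 < b2 y \<and> y \<inter> (A - X) \<noteq> {}} \<le> card {y\<in>Pow C. 0 < b y \<and> y \<inter> A \<noteq> {}}"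
      using finB by (intro card_mono) (auto simp: b2_def split: if_splits)
    ultimately show ?thesis unfolding meas_def by linarith
  qed
  obtain F1 where F1: "feas C b1 X F1" "\<forall>x\<in>X. d x \<le> Supp C F1 x" using IH[OF ok1 m1] by (auto simp: SOL_def)
  obtain F2 where F2: "feas C b2 (A - X) F2" "\<forall>x\<in>A - X. d x \<le> Supp C F2 x" using IH[OF ok2 m2] by (auto simp: SOL_def)
  define F where "F = (\<lambda>y x. if x \<in> X then F1 y x else F2 y x)"
  have "feas C b A F"
    unfolding feas_def
  proof (intro conjI ballI impI)
    fix y c assume "y \<in> Pow C" "c \<in> A" then show "0 \<le> F y c" using F1(1) F2(1) by (auto simp: F_def feas_def)
  next
    fix y c assume "y \<in> Pow C" "c \<in> A" "c \<notin> y" then show "F y c = 0" using F1(1) F2(1) by (auto simp: F_def feas_def)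
  next
    fix y assume y: "y \<in> Pow C" "y \<inter> A \<noteq> {}"
    have s1: "(\<Sum>c\<in>X \<inter> y. F1 y c) = b1 y"
    proof (cases "y \<inter> X = {}")
      case True then show ?thesis by (simp add: b1_def Int_commute)
    next
      case False then show ?thesis using F1(1) y(1) by (auto simp: feas_def Int_commute)
    qed
    have s2: "(\<Sum>c\<in>(A - X) \<inter> y. F2 y c) = b2 y"
    proof (cases "y \<inter> (A - X) = {}")
      case True then have "y \<inter> X \<noteq> {}" using y(2) by blast
      then show ?thesis using True by (simp add: b2_def Int_commute)
    next
      case False then show ?thesis using F2(1) y(1) by (auto simp: feas_def Int_commute)
    qed
    have fAy: "finite (A \<inter> y)" using finA by simp
    have eqA: "A \<inter> y = (X \<inter> y) \<union> ((A - X) \<inter> y)" using X(1) by blast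
    have "(\<Sum>c\<in>A \<inter> y. F y c) = (\<Sum>c\<in>X \<inter> y. F y c) + (\<Sum>c\<in>(A - X) \<inter> y. F y c)"
      by (subst eqA, rule sum.union_disjoint) (use finA finX in auto)
    also have "(\<Sum>c\<in>X \<inter> y. F y c) = (\<Sum>c\<in>X \<inter> y. F1 y c)" by (rule sum.cong) (auto simp: F_def)
    also have "(\<Sum>c\<in>(A - X) \<inter> y. F y c) = (\<Sum>c\<in>(A - X) \<inter> y. F2 y c)" by (rule sum.cong) (auto simp: F_def)
    finally show "(\<Sum>c\<in>A \<inter> y. F y c) = b y" using s1 s2 by (simp add: b1_def b2_def)
  qed
  moreover have "\<forall>x\<in>A. d x \<le> Supp C F x"
  proof
    fix x assume x: "x \<in> A"
    show "d x \<le> Supp C F x"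
    proof (cases "x \<in> X")
      case True
      have "Supp C F x = Supp C F1 x" unfolding Supp_def by (rule sum.cong) (auto simp: F_def True)
      then show ?thesis using F1(2) True by simp
    next
      case False
      have "Supp C F x = Supp C F2 x" unfolding Supp_def by (rule sum.cong) (auto simp: F_def False)
      then show ?thesis using F2(2) False x by simp
    qed
  qed
  ultimately show ?thesis unfolding SOL_def by blast
qed

lemma NN_upd:
  assumes "finite C" "y0 \<in> Pow C"
  shows "NN C (b(y0 := v)) X = (if y0 \<inter> X \<noteq> {} then NN C b X - b y0 + v else NN C b X)"
  unfolding NN_def using assms by (subst sum_upd_real) auto

lemma Supp_upd:
  assumes "finite C" "y0 \<in> Pow C"
  shows "Supp C (F(y0 := (F y0)(a := v))) x = (if x = a then Supp C F x - F y0 a + v else Supp C F x)"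
proof -
  have e: "(\<lambda>y. (F(y0 := (F y0)(a := v))) y x) = (\<lambda>y. F y x)(y0 := ((F y0)(a := v)) x)"
    by (rule ext) simp
  have fP: "finite (Pow C)" using assms(1) by simp
  have "Supp C (F(y0 := (F y0)(a := v))) x = Supp C F x - F y0 x + ((F y0)(a := v)) x"
    unfolding Supp_def e sum_upd_real[OF fP] using assms(2) by simp
  then show ?thesis by (cases "x = a") simp_all
qed

lemma H_step:
  assumes fin: "finite C" and ok: "OK C b d A"
    and IH: "\<And>b' d' A'. OK C b' d' A' \<Longrightarrow> meas C b' d' A' < meas C b d A \<Longrightarrow> SOL C b' d' A'"
  shows "SOL C b d A"
proof -
  have AC: "A \<subseteq> C" and bnn: "\<forall>y. 0 \<le> b y" and dnn: "\<forall>x. 0 \<le> d x"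
    and hall: "\<forall>Z\<subseteq>A. sum d Z \<le> NN C b Z" using ok by (auto simp: OK_def)
  have finA: "finite A" using AC fin finite_subset by blast
  show ?thesis
  proof (cases "\<exists>X. X \<subseteq> A \<and> X \<noteq> {} \<and> X \<noteq> A \<and> sum d X = NN C b X")
    case True
    then obtain X where "X \<subseteq> A" "X \<noteq> {}" "X \<noteq> A" "sum d X = NN C b X" by blast
    then show ?thesis using split_case[OF fin ok _ _ _ _ IH] by blast
  next
    case notight: False
    show ?thesis
    proof (cases "\<exists>a\<in>A. 0 < d a")
      case False
      obtain F where F: "feas C b A F" using feas_triv[OF fin bnn] by blast
      have "\<forall>x\<in>A. d x \<le> Supp C F x" using False Supp_nonneg[OF F] by force
      then show ?thesis using F by (auto simp: SOL_def)
    next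
      case True
      then obtain a where a: "a \<in> A" "0 < d a" by blast
      have "{a} \<subseteq> A" using a(1) by simp
      then have "sum d {a} \<le> NN C b {a}" by (rule hall[rule_format])
      then have "d a \<le> NN C b {a}" by simp
      then have "\<exists>y0\<in>Pow C. a \<in> y0 \<and> 0 < b y0"
      proof (rule contrapos_pp)
        assume na: "\<not> (\<exists>y0\<in>Pow C. a \<in> y0 \<and> 0 < b y0)"
        have "NN C b {a} \<le> 0" unfolding NN_def
        proof (rule sum_nonpos)
          fix y assume "y \<in> {y \<in> Pow C. y \<inter> {a} \<noteq> {}}"
          then have "y \<in> Pow C" "a \<in> y" by auto
          then show "b y \<le> 0" using na by (simp add: not_less)
        qed
        then show "\<not> d a \<le> NN C b {a}" using a(2) by linarith
      qed
      then obtain y0 where y0: "y0 \<in> Pow C" "a \<in> y0" "0 < b y0" by blast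
      define Q where "Q = {X. X \<subseteq> A \<and> X \<noteq> {} \<and> a \<notin> X \<and> y0 \<inter> X \<noteq> {}}"
      define \<delta> where "\<delta> = (\<lambda>X. NN C b X - sum d X)"
      define \<epsilon> where "\<epsilon> = (if Q = {} then b y0 else Min (\<delta> ` Q))"
      have finQ: "finite Q" unfolding Q_def using finA by (rule finite_subset[rotated, OF finite_Pow_iff[THEN iffD2]]) auto
      have Qpos: "\<forall>X\<in>Q. 0 < \<delta> X"
      proof
        fix X assume "X \<in> Q"
        then have X: "X \<subseteq> A" "X \<noteq> {}" "X \<noteq> A" using a(1) by (auto simp: Q_def)
        then have "sum d X \<noteq> NN C b X" using notight by blast
        moreover have "sum d X \<le> NN C b X" using hall X by blast
        ultimately show "0 < \<delta> X" by (simp add: \<delta>_def)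
      qed
      have epos: "0 < \<epsilon>"
      proof (cases "Q = {}")
        case True then show ?thesis using y0 by (simp add: \<epsilon>_def)
      next
        case False
        have "Min (\<delta> ` Q) \<in> \<delta> ` Q" using False finQ by simp
        then show ?thesis using Qpos False by (auto simp: \<epsilon>_def)
      qed
      have ele: "\<forall>X\<in>Q. \<epsilon> \<le> \<delta> X"
        using finQ by (auto simp: \<epsilon>_def)
      define \<theta> where "\<theta> = min (b y0) (min (d a) \<epsilon>)"
      have tpos: "0 < \<theta>" using y0 a epos by (simp add: \<theta>_def)
      define b' where "b' = b(y0 := b y0 - \<theta>)"
      define d' where "d' = d(a := d a - \<theta>)"
      have ok': "OK C b' d' A"
        unfolding OK_def
      proof (intro conjI allI impI)
        show "A \<subseteq> C" by (rule AC)
        fix y show "0 \<le> b' y" using bnn by (simp add: b'_def \<theta>_def)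
      next
        fix x show "0 \<le> d' x" using dnn by (simp add: d'_def \<theta>_def min.coboundedI2)
      next
        fix X assume X: "X \<subseteq> A"
        have finX: "finite X" using X finA finite_subset by blast
        have sd: "sum d' X = (if a \<in> X then sum d X - \<theta> else sum d X)"
          unfolding d'_def using sum_upd_real[OF finX] by simp
        have sb: "NN C b' X = (if y0 \<inter> X \<noteq> {} then NN C b X - \<theta> else NN C b X)"
          unfolding b'_def using NN_upd[OF fin y0(1)] by simp
        have h: "sum d X \<le> NN C b X" using hall X by blast
        show "sum d' X \<le> NN C b' X"
        proof (cases "a \<in> X")
          case True then have "y0 \<inter> X \<noteq> {}" using y0(2) by blast
          then show ?thesis using sd sb True h by simp
        next
          case aX: False
          show ?thesis
          proof (cases "y0 \<inter> X = {}")
            case True then show ?thesis using sd sb aX h by simp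
          next
            case False
            then have "X \<in> Q" using X aX by (auto simp: Q_def)
            then have "\<theta> \<le> \<delta> X" using ele by (fastforce simp: \<theta>_def)
            then show ?thesis using sd sb aX False by (simp add: \<delta>_def)
          qed
        qed
      qed
      have finB: "finite {y\<in>Pow C. 0 < b y \<and> y \<inter> A \<noteq> {}}" using fin by simp
      have mle: "meas C b' d' A \<le> meas C b d A"
      proof -
        have "card {x\<in>A. 0 < d' x} \<le> card {x\<in>A. 0 < d x}"
          using finA tpos by (intro card_mono) (auto simp: d'_def split: if_splits)
        moreover have "card {y\<in>Pow C. 0 < b' y \<and> y \<inter> A \<noteq> {}} \<le> card {y\<in>Pow C. 0 < b y \<and> y \<inter> A \<noteq> {}}"
          using finB tpos by (intro card_mono) (auto simp: b'_def split: if_splits)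
        ultimately show ?thesis unfolding meas_def by linarith
      qed
      have SOL': "SOL C b' d' A"
      proof (cases "meas C b' d' A < meas C b d A")
        case True then show ?thesis using IH ok' by blast
      next
        case False
        then have meq: "meas C b' d' A = meas C b d A" using mle by linarith
        have t1: "\<theta> \<noteq> b y0"
        proof
          assume eq: "\<theta> = b y0"
          have "{y\<in>Pow C. 0 < b' y \<and> y \<inter> A \<noteq> {}} \<subset> {y\<in>Pow C. 0 < b y \<and> y \<inter> A \<noteq> {}}"
            using y0 a(1) eq tpos by (auto simp: b'_def split: if_splits)
          then have "card {y\<in>Pow C. 0 < b' y \<and> y \<inter> A \<noteq> {}} < card {y\<in>Pow C. 0 < b y \<and> y \<inter> A \<noteq> {}}"
            using finB by (rule psubset_card_mono[rotated])
          moreover have "card {x\<in>A. 0 < d' x} \<le> card {x\<in>A. 0 < d x}"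
            using finA tpos by (intro card_mono) (auto simp: d'_def split: if_splits)
          ultimately show False using meq unfolding meas_def by linarith
        qed
        have t2: "\<theta> \<noteq> d a"
        proof
          assume eq: "\<theta> = d a"
          have "{x\<in>A. 0 < d' x} \<subset> {x\<in>A. 0 < d x}"
            using a eq tpos by (auto simp: d'_def split: if_splits)
          then have "card {x\<in>A. 0 < d' x} < card {x\<in>A. 0 < d x}"
            using finA by (intro psubset_card_mono) auto
          moreover have "card {y\<in>Pow C. 0 < b' y \<and> y \<inter> A \<noteq> {}} \<le> card {y\<in>Pow C. 0 < b y \<and> y \<inter> A \<noteq> {}}"
            using finB tpos by (intro card_mono) (auto simp: b'_def split: if_splits)
          ultimately show False using meq unfolding meas_def by linarith
        qed
        have te: "\<theta> = \<epsilon>" using t1 t2 by (auto simp: \<theta>_def min_def split: if_splits)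
        have Qne: "Q \<noteq> {}" using te t1 by (auto simp: \<epsilon>_def)
        then have "Min (\<delta> ` Q) \<in> \<delta> ` Q" using finQ by simp
        then obtain X0 where X00: "X0 \<in> Q" "Min (\<delta> ` Q) = \<delta> X0" by (rule imageE)
        have X0: "X0 \<in> Q" "\<delta> X0 = \<epsilon>" using X00 Qne by (simp_all add: \<epsilon>_def)
        have X0p: "X0 \<subseteq> A" "X0 \<noteq> {}" "X0 \<noteq> A" "a \<notin> X0" "y0 \<inter> X0 \<noteq> {}" using X0(1) a(1) by (auto simp: Q_def)
        have finX0: "finite X0" using X0p finA finite_subset by blast
        have "sum d' X0 = sum d X0" unfolding d'_def using sum_upd_real[OF finX0] X0p by simp
        moreover have "NN C b' X0 = NN C b X0 - \<theta>"
          unfolding b'_def using NN_upd[OF fin y0(1)] X0p by simp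
        ultimately have "sum d' X0 = NN C b' X0" using X0(2) te by (simp add: \<delta>_def)
        then show ?thesis using split_case[OF fin ok' X0p(1-3)] IH meq by simp
      qed
      then obtain F' where F': "feas C b' A F'" "\<forall>x\<in>A. d' x \<le> Supp C F' x" by (auto simp: SOL_def)
      define F where "F = F'(y0 := (F' y0)(a := F' y0 a + \<theta>))"
      have "feas C b A F"
        unfolding feas_def
      proof (intro conjI ballI impI)
        fix y c assume "y \<in> Pow C" "c \<in> A" then show "0 \<le> F y c" using F'(1) tpos
          by (auto simp: F_def feas_def)
      next
        fix y c assume "y \<in> Pow C" "c \<in> A" "c \<notin> y" then show "F y c = 0" using F'(1) y0(2)
          by (auto simp: F_def feas_def)
      next
        fix y assume y: "y \<in> Pow C" "y \<inter> A \<noteq> {}"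
        have s: "(\<Sum>c\<in>A \<inter> y. F' y c) = b' y" using F'(1) y by (auto simp: feas_def)
        show "(\<Sum>c\<in>A \<inter> y. F y c) = b y"
        proof (cases "y = y0")
          case False
          then show ?thesis using s by (simp add: F_def b'_def)
        next
          case True
          have fAy: "finite (A \<inter> y)" using finA by simp
          have "(\<Sum>c\<in>A \<inter> y. F y c) = (\<Sum>c\<in>A \<inter> y. ((F' y0)(a := F' y0 a + \<theta>)) c)" using True by (simp add: F_def)
          also have "\<dots> = (\<Sum>c\<in>A \<inter> y. F' y c) + \<theta>" using sum_upd_real[OF fAy] True a(1) y0(2) by simp
          finally show ?thesis using s True by (simp add: b'_def)
        qed
      qed
      moreover have "\<forall>x\<in>A. d x \<le> Supp C F x"
      proof
        fix x assume x: "x \<in> A"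
        have "Supp C F x = (if x = a then Supp C F' x + \<theta> else Supp C F' x)"
          unfolding F_def using Supp_upd[OF fin y0(1)] by simp
        then show "d x \<le> Supp C F x" using F'(2) x by (auto simp: d'_def split: if_splits)
      qed
      ultimately show ?thesis unfolding SOL_def by blast
    qed
  qed
qed

lemma H:
  assumes "finite C" "OK C b d A"
  shows "SOL C b d A"
proof -
  have "\<forall>b d A. meas C b d A = n \<longrightarrow> OK C b d A \<longrightarrow> SOL C b d A" for n
  proof (induction n rule: less_induct)
    case (less n)
    show ?case
    proof (intro allI impI)
      fix b d A assume "meas C b d A = n" "OK C b d A"
      then show "SOL C b d A" using H_step[OF assms(1)] less by blast
    qed
  qed
  then show ?thesis using assms(2) by blast
qed



lemma Fam_feas: "F \<in> Fam C B A \<longleftrightarrow> feas C (\<lambda>y. real (B y)) A F"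
  unfolding Fam_def feas_def by simp

lemma NN_nonneg: "0 \<le> NN C (\<lambda>y. real (B y)) X"
  unfolding NN_def by (rule sum_nonneg) simp

lemma F_le_B:
  assumes F: "F \<in> Fam C B A" and fin: "finite C" and y: "y \<in> Pow C" and x: "x \<in> A" and AC: "A \<subseteq> C"
  shows "F y x \<le> real (B y)"
proof (cases "x \<in> y")
  case False
  then have "F y x = 0" using F y x by (auto simp: Fam_def)
  then show ?thesis by simp
next
  case True
  have fin2: "finite (A \<inter> y)" using fin AC finite_subset by blast
  have "F y x \<le> (\<Sum>c\<in>A \<inter> y. F y c)"
    by (rule member_le_sum) (use F y True x fin2 in \<open>auto simp: Fam_def\<close>)
  also have "\<dots> = real (B y)" using F y True x by (auto simp: Fam_def)
  finally show ?thesis .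
qed

lemma Fam_facts:
  assumes "F \<in> Fam C B A"
  shows "\<And>y c. y \<in> Pow C \<Longrightarrow> c \<in> A \<Longrightarrow> 0 \<le> F y c"
    and "\<And>y c. y \<in> Pow C \<Longrightarrow> c \<in> A \<Longrightarrow> c \<notin> y \<Longrightarrow> F y c = 0"
    and "\<And>y. y \<in> Pow C \<Longrightarrow> y \<inter> A \<noteq> {} \<Longrightarrow> (\<Sum>c\<in>A \<inter> y. F y c) = real (B y)"
  using assms unfolding Fam_def by blast+

lemma sum_Supp_le:
  assumes F: "F \<in> Fam C B A" and fin: "finite C" and AC: "A \<subseteq> C" and XA: "X \<subseteq> A"
  shows "(\<Sum>x\<in>X. Supp C F x) \<le> NN C (\<lambda>y. real (B y)) X"
proof -
  note Fnn = Fam_facts(1)[OF F] and Fz = Fam_facts(2)[OF F] and Fs = Fam_facts(3)[OF F]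
  have finA: "finite A" using finite_subset[OF AC fin] .
  have finX: "finite X" using finite_subset[OF XA finA] .
  define g where "g = (\<lambda>y. \<Sum>x\<in>X. F y x)"
  have "(\<Sum>x\<in>X. Supp C F x) = (\<Sum>y\<in>Pow C. g y)"
    unfolding Supp_def g_def by (rule sum.swap[of "\<lambda>x y. F y x" "Pow C" X])
  also have "\<dots> = (\<Sum>y\<in>{y\<in>Pow C. y \<inter> X \<noteq> {}}. g y)"
  proof (rule sum.mono_neutral_cong_right)
    show "finite (Pow C)" using fin by simp
    show "{y\<in>Pow C. y \<inter> X \<noteq> {}} \<subseteq> Pow C" by blast
  next
    show "\<forall>y\<in>Pow C - {y\<in>Pow C. y \<inter> X \<noteq> {}}. g y = 0"
    proof
    fix y assume "y \<in> Pow C - {y\<in>Pow C. y \<inter> X \<noteq> {}}"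
    then have y: "y \<in> Pow C" "y \<inter> X = {}" by auto
    have "\<forall>x\<in>X. F y x = 0"
    proof
      fix x assume x: "x \<in> X"
      then have "x \<notin> y" using y(2) by blast
      then show "F y x = 0" using Fz[OF y(1)] x XA by blast
    qed
    then show "g y = 0" unfolding g_def by (rule sum.neutral)
    qed
  qed simp
  also have "\<dots> \<le> (\<Sum>y\<in>{y\<in>Pow C. y \<inter> X \<noteq> {}}. real (B y))"
  proof (rule sum_mono)
    fix y assume "y \<in> {y\<in>Pow C. y \<inter> X \<noteq> {}}"
    then have y: "y \<in> Pow C" "y \<inter> X \<noteq> {}" by auto
    have yA: "y \<inter> A \<noteq> {}" using y(2) XA by blast
    have "g y = (\<Sum>x\<in>X \<inter> y. F y x)" unfolding g_def
    proof (rule sum.mono_neutral_cong_right)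
      show "finite X" by (rule finX)
      show "X \<inter> y \<subseteq> X" by blast
    next
      show "\<forall>x\<in>X - X \<inter> y. F y x = 0"
      proof
      fix x assume x: "x \<in> X - X \<inter> y"
      then have "x \<notin> y" "x \<in> A" using XA by auto
      then show "F y x = 0" using Fz[OF y(1)] by blast
      qed
    qed simp
    also have "\<dots> \<le> (\<Sum>x\<in>A \<inter> y. F y x)"
    proof (rule sum_mono2)
      show "finite (A \<inter> y)" using finA by simp
      show "X \<inter> y \<subseteq> A \<inter> y" using XA by blast
    next
      fix x assume "x \<in> A \<inter> y - X \<inter> y"
      then have "x \<in> A" by blast
      then show "0 \<le> F y x" using Fnn[OF y(1)] by blast
    qed
    also have "\<dots> = real (B y)" by (rule Fs[OF y(1) yA])
    finally show "g y \<le> real (B y)" .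
  qed
  finally show ?thesis unfolding NN_def .
qed

lemma Supp_le_total:
  assumes F: "F \<in> Fam C B A" and fin: "finite C" and AC: "A \<subseteq> C" and x: "x \<in> A"
  shows "Supp C F x \<le> (\<Sum>y\<in>Pow C. real (B y))"
  unfolding Supp_def by (rule sum_mono) (use F_le_B[OF F fin _ x AC] in auto)

lemma maxMin_ge:
  assumes fin: "finite C" and AC: "A \<subseteq> C" and Ane: "A \<noteq> {}" and t: "0 \<le> t"
    and hall: "\<forall>X\<subseteq>A. t * real (card X) \<le> NN C (\<lambda>y. real (B y)) X"
  shows "t \<le> maxMin C B A"
proof -
  have finA: "finite A" using AC fin finite_subset by blast
  have ok: "OK C (\<lambda>y. real (B y)) (\<lambda>_. t) A"
    unfolding OK_def using AC t hall by (auto simp: mult.commute)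
  obtain F where F: "feas C (\<lambda>y. real (B y)) A F" "\<forall>x\<in>A. t \<le> Supp C F x"
    using H[OF fin ok] by (auto simp: SOL_def)
  have FF: "F \<in> Fam C B A" using F(1) by (simp add: Fam_feas)
  have "t \<le> Min (Supp C F ` A)" using F(2) finA Ane by simp
  also have "\<dots> \<le> maxMin C B A" unfolding maxMin_def
  proof (rule cSUP_upper[OF FF])
    show "bdd_above ((\<lambda>F. Min (Supp C F ` A)) ` Fam C B A)"
    proof (rule bdd_aboveI2)
      fix G assume G: "G \<in> Fam C B A"
      obtain x where x: "x \<in> A" using Ane by blast
      have "Min (Supp C G ` A) \<le> Supp C G x" using finA x by simp
      also have "\<dots> \<le> (\<Sum>y\<in>Pow C. real (B y))" by (rule Supp_le_total[OF G fin AC x])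
      finally show "Min (Supp C G ` A) \<le> (\<Sum>y\<in>Pow C. real (B y))" .
    qed
  qed
  finally show ?thesis .
qed

lemma maxMin_le:
  assumes fin: "finite C" and AC: "A \<subseteq> C" and Ane: "A \<noteq> {}" and XA: "X \<subseteq> A"
  shows "maxMin C B A * real (card X) \<le> NN C (\<lambda>y. real (B y)) X"
proof (cases "X = {}")
  case True then show ?thesis by simp
next
  case False
  have finA: "finite A" using AC fin finite_subset by blast
  have finX: "finite X" using XA finA finite_subset by blast
  have cX: "0 < real (card X)" using False finX by (simp add: card_gt_0_iff)
  obtain F0 where "feas C (\<lambda>y. real (B y)) A F0" using feas_triv[of C "\<lambda>y. real (B y)" A] fin by auto
  then have Fne: "Fam C B A \<noteq> {}" by (auto simp: Fam_feas)
  have "maxMin C B A \<le> NN C (\<lambda>y. real (B y)) X / real (card X)"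
    unfolding maxMin_def
  proof (rule cSUP_least[OF Fne])
    fix F assume F: "F \<in> Fam C B A"
    have "real (card X) * Min (Supp C F ` A) \<le> (\<Sum>x\<in>X. Supp C F x)"
      by (rule sum_bounded_below) (use finA XA in auto)
    also have "\<dots> \<le> NN C (\<lambda>y. real (B y)) X" by (rule sum_Supp_le[OF F fin AC XA])
    finally show "Min (Supp C F ` A) \<le> NN C (\<lambda>y. real (B y)) X / real (card X)"
      using cX by (simp add: field_simps)
  qed
  then show ?thesis using cX by (simp add: field_simps)
qed



lemma Qlemma:
  fixes B :: "'c set \<Rightarrow> nat"
  assumes fin: "finite C" and D: "D \<subseteq> E" and EC: "E \<subseteq> C" and c: "c \<in> C" "c \<notin> E"
    and Y: "Y \<subseteq> Pow C" "\<forall>y\<in>Y. c \<in> y"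
    and beta: "\<beta> = (\<Sum>y\<in>Y. real (B y)) / (real (card (E \<inter> \<Union>Y)) + 1)"
    and HD: "\<forall>Z\<subseteq>D. \<beta> * real (card Z) \<le> NN C (\<lambda>y. real (B y)) Z"
  shows "\<forall>X\<subseteq>D \<union> {c}. \<beta> * real (card X) \<le> NN C (\<lambda>y. real (B y)) X"
proof (intro allI impI)
  fix X assume X: "X \<subseteq> D \<union> {c}"
  define T where "T = (\<Sum>y\<in>Y. real (B y))"
  define k where "k = card (E \<inter> \<Union>Y)"
  have finE: "finite E" using finite_subset[OF EC fin] .
  have T0: "0 \<le> T" unfolding T_def by (rule sum_nonneg) simp
  have b0: "0 \<le> \<beta>" unfolding beta using T0 by (simp add: T_def)
  have bk: "\<beta> * (real k + 1) = T" unfolding beta T_def k_def by (simp add: field_simps)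
  show "\<beta> * real (card X) \<le> NN C (\<lambda>y. real (B y)) X"
  proof (cases "c \<in> X")
    case False
    then have "X \<subseteq> D" using X by blast
    then show ?thesis using HD by blast
  next
    case True
    define X' where "X' = X - {c}"
    define U where "U = X' - \<Union>Y"
    define W where "W = X' \<inter> \<Union>Y"
    have X'D: "X' \<subseteq> D" using X by (auto simp: X'_def)
    have finX': "finite X'" using finite_subset[OF X'D finite_subset[OF D finE]] .
    have finU: "finite U" using finX' by (simp add: U_def)
    have finW: "finite W" using finX' by (simp add: W_def)
    have Xeq: "X = insert c (W \<union> U)" using True by (auto simp: X'_def U_def W_def)
    have cWU: "c \<notin> W \<union> U" by (auto simp: X'_def U_def W_def)
    have WU: "W \<inter> U = {}" by (auto simp: U_def W_def)
    have cardX: "card X = Suc (card W + card U)"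
      unfolding Xeq using cWU finU finW WU by (simp add: card_Un_disjoint)
    have UD: "U \<subseteq> D" using X'D by (auto simp: U_def)
    have hU: "\<beta> * real (card U) \<le> NN C (\<lambda>y. real (B y)) U" using HD UD by blast
    have "W \<subseteq> E \<inter> \<Union>Y" using X'D D by (auto simp: W_def)
    then have cW: "card W \<le> k" unfolding k_def by (rule card_mono[rotated]) (use finE in simp)
    have finY: "finite Y" using finite_subset[OF Y(1)] fin by simp
    define SU where "SU = {y\<in>Pow C. y \<inter> U \<noteq> {}}"
    have finSU: "finite SU" using fin by (simp add: SU_def)
    have disj: "Y \<inter> SU = {}"
    proof (rule ccontr)
      assume "Y \<inter> SU \<noteq> {}"
      then obtain y u where "y \<in> Y" "u \<in> y" "u \<in> U" by (auto simp: SU_def)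
      then show False by (auto simp: U_def)
    qed
    have sub: "Y \<union> SU \<subseteq> {y\<in>Pow C. y \<inter> X \<noteq> {}}"
    proof
      fix y assume "y \<in> Y \<union> SU"
      then show "y \<in> {y\<in>Pow C. y \<inter> X \<noteq> {}}"
      proof
        assume y: "y \<in> Y"
        then have "c \<in> y \<inter> X" using Y(2) True by blast
        then show ?thesis using y Y(1) by blast
      next
        assume "y \<in> SU"
        then show ?thesis unfolding SU_def using Xeq by blast
      qed
    qed
    have "T + NN C (\<lambda>y. real (B y)) U = (\<Sum>y\<in>Y \<union> SU. real (B y))"
      unfolding T_def NN_def SU_def[symmetric] using finY finSU disj by (simp add: sum.union_disjoint)
    also have "\<dots> \<le> NN C (\<lambda>y. real (B y)) X"
      unfolding NN_def by (rule sum_mono2) (use fin sub in auto)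
    finally have hX: "T + NN C (\<lambda>y. real (B y)) U \<le> NN C (\<lambda>y. real (B y)) X" .
    have "\<beta> * real (card X) = \<beta> * (real (card W) + 1) + \<beta> * real (card U)"
      unfolding cardX by (simp add: algebra_simps)
    also have "\<beta> * (real (card W) + 1) \<le> \<beta> * (real k + 1)"
      using cW b0 by (intro mult_left_mono) auto
    finally show ?thesis using bk hU hX by linarith
  qed
qed



theorem lemma5:
  fixes V :: "'v set" and C :: "'c set" and S :: nat and B :: "'c set \<Rightarrow> nat"
    and ws :: "'c list" and i :: nat and c :: 'c and Y :: "'c set set"
  assumes "election V C S B"
    and "ODH_run C S B ws"
    and "i < S"
    and "c \<in> C - set (take i ws)"
    and "Y \<subseteq> Pow C"
    and "\<forall>y\<in>Y. c \<in> y"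
  shows "maxMin C B (set (take i ws) \<union> {c}) \<ge>
           (\<Sum>y\<in>Y. real (B y)) / (real (card (set (take i ws) \<inter> \<Union>Y)) + 1)"
proof -
  have fin: "finite C" using assms(1) by (simp add: election_def)
  have len: "length ws = S" using assms(2) by (simp add: ODH_run_def)
  have run: "\<And>j. j < S \<Longrightarrow> ws ! j \<in> C - set (take j ws) \<and>
        (\<exists>s :: 'c \<Rightarrow> real.
           (\<forall>c\<in>C - set (take j ws). \<exists>F\<in>FamOpt C B (set (take j ws) \<union> {c}). s c = Supp C F c) \<and>
           (\<forall>c\<in>C - set (take j ws). s c \<le> s (ws ! j)))"
    using assms(2) unfolding ODH_run_def Let_def by blast
  define Ce where "Ce = (\<lambda>j. set (take j ws))"
  define E where "E = Ce i"
  define Bn where "Bn = (\<lambda>y. real (B y))"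
  define \<beta> where "\<beta> = (\<Sum>y\<in>Y. real (B y)) / (real (card (E \<inter> \<Union>Y)) + 1)"
  have b0: "0 \<le> \<beta>" unfolding \<beta>_def by (intro divide_nonneg_pos sum_nonneg) auto
  have CeC: "Ce j \<subseteq> C" if "j \<le> S" for j
  proof -
    have "set (take j ws) \<subseteq> set ws" by (rule set_take_subset)
    moreover have "set ws \<subseteq> C"
    proof
      fix x assume "x \<in> set ws"
      then obtain l where "l < length ws" "ws ! l = x" by (auto simp: in_set_conv_nth)
      then show "x \<in> C" using run[of l] len by auto
    qed
    ultimately show ?thesis unfolding Ce_def by blast
  qed
  have EC: "E \<subseteq> C" unfolding E_def using CeC assms(3) by simp
  have CeE: "Ce j \<subseteq> E" if "j \<le> i" for j unfolding Ce_def E_def by (rule set_take_subset_set_take[OF that])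
  have cC: "c \<in> C" "c \<notin> E" using assms(4) by (auto simp: E_def Ce_def)
  have Q: "\<forall>X\<subseteq>Ce j \<union> {c}. \<beta> * real (card X) \<le> NN C Bn X"
    if "j \<le> i" "\<forall>Z\<subseteq>Ce j. \<beta> * real (card Z) \<le> NN C Bn Z" for j
    unfolding Bn_def
    by (rule Qlemma[OF fin CeE[OF that(1)] EC cC assms(5,6) \<beta>_def]) (use that(2) in \<open>simp add: Bn_def\<close>)
  have mQ: "\<beta> \<le> maxMin C B (Ce j \<union> {c})"
    if "j \<le> i" "\<forall>Z\<subseteq>Ce j. \<beta> * real (card Z) \<le> NN C Bn Z" for j
  proof (rule maxMin_ge[OF fin _ _ b0])
    show "Ce j \<union> {c} \<subseteq> C" using CeC[of j] that(1) assms(3) cC by simp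
    show "Ce j \<union> {c} \<noteq> {}" by simp
    show "\<forall>X\<subseteq>Ce j \<union> {c}. \<beta> * real (card X) \<le> NN C (\<lambda>y. real (B y)) X"
      using Q[OF that] by (simp add: Bn_def)
  qed
  have HB: "\<forall>Z\<subseteq>Ce j. \<beta> * real (card Z) \<le> NN C Bn Z" if "j \<le> i" for j
    using that
  proof (induction j)
    case 0
    then show ?case by (simp add: Ce_def)
  next
    case (Suc j)
    have ji: "j \<le> i" using Suc.prems by simp
    have jS: "j < S" using Suc.prems assms(3) by simp
    have IH: "\<forall>Z\<subseteq>Ce j. \<beta> * real (card Z) \<le> NN C Bn Z" using Suc.IH ji by blast
    define w where "w = ws ! j"
    define A' where "A' = Ce j \<union> {w}"
    have CeS: "Ce (Suc j) = A'" unfolding Ce_def A'_def w_def using jS len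
      by (simp add: take_Suc_conv_app_nth)
    obtain s :: "'c \<Rightarrow> real" where
      s1: "\<forall>c\<in>C - Ce j. \<exists>F\<in>FamOpt C B (Ce j \<union> {c}). s c = Supp C F c" and
      s2: "\<forall>c\<in>C - Ce j. s c \<le> s w" and wC: "w \<in> C - Ce j"
      using run[OF jS] unfolding Ce_def w_def by blast
    have cCe: "c \<in> C - Ce j" using cC CeE[OF ji] by blast
    obtain Fc where Fc: "Fc \<in> FamOpt C B (Ce j \<union> {c})" "s c = Supp C Fc c" using s1 cCe by blast
    have "\<beta> \<le> maxMin C B (Ce j \<union> {c})" by (rule mQ[OF ji IH])
    also have "\<dots> \<le> Supp C Fc c" using Fc(1) by (simp add: FamOpt_def)
    finally have bsc: "\<beta> \<le> s c" using Fc(2) by simp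
    obtain Fw where Fw: "Fw \<in> FamOpt C B A'" "s w = Supp C Fw w" using s1 wC unfolding A'_def by blast
    have "s c \<le> s w" using s2 cCe by blast
    then have bsw: "\<beta> \<le> Supp C Fw w" using bsc Fw(2) by linarith
    have FwF: "Fw \<in> Fam C B A'" and Fwopt: "\<forall>x\<in>A'. maxMin C B A' \<le> Supp C Fw x"
      using Fw(1) by (auto simp: FamOpt_def)
    have A'C: "A' \<subseteq> C" unfolding A'_def using CeC[of j] jS wC by simp
    have finA': "finite A'" using finite_subset[OF A'C fin] .
    define XX where "XX = {X. X \<subseteq> A' \<and> X \<noteq> {}}"
    define \<rho> where "\<rho> = (\<lambda>X. NN C Bn X / real (card X))"
    define r where "r = Min (\<rho> ` XX)"
    have finXX: "finite XX" unfolding XX_def using finA' by simp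
    have XXne: "XX \<noteq> {}" unfolding XX_def A'_def by blast
    have rle: "r \<le> \<rho> X" if "X \<in> XX" for X unfolding r_def using finXX that by simp
    have rX: "r * real (card X) \<le> NN C Bn X" if "X \<subseteq> A'" for X
    proof (cases "X = {}")
      case True then show ?thesis by (simp add: Bn_def)
    next
      case False
      then have XX: "X \<in> XX" using that by (simp add: XX_def)
      have "0 < real (card X)" using False finite_subset[OF that finA'] by (simp add: card_gt_0_iff)
      then show ?thesis using rle[OF XX] by (simp add: \<rho>_def field_simps)
    qed
    have "r \<in> \<rho> ` XX" unfolding r_def using finXX XXne by simp
    then obtain Xs where Xs: "Xs \<in> XX" "r = \<rho> Xs" by blast
    have Xs': "Xs \<subseteq> A'" "Xs \<noteq> {}" using Xs(1) by (auto simp: XX_def)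
    have finXs: "finite Xs" using finite_subset[OF Xs'(1) finA'] .
    have cXs: "0 < real (card Xs)" using Xs'(2) finXs by (simp add: card_gt_0_iff)
    have rXs: "r * real (card Xs) = NN C Bn Xs" using Xs(2) cXs by (simp add: \<rho>_def)
    have r0: "0 \<le> r" unfolding Xs(2) \<rho>_def Bn_def using NN_nonneg[of C B Xs] by simp
    have mr: "r \<le> maxMin C B A'"
    proof (rule maxMin_ge[OF fin A'C _ r0])
      show "A' \<noteq> {}" unfolding A'_def by blast
      show "\<forall>X\<subseteq>A'. r * real (card X) \<le> NN C (\<lambda>y. real (B y)) X" using rX by (simp add: Bn_def)
    qed
    have br: "\<beta> \<le> r"
    proof (cases "w \<in> Xs")
      case False
      then have "Xs \<subseteq> Ce j" using Xs'(1) unfolding A'_def by blast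
      then have "\<beta> * real (card Xs) \<le> r * real (card Xs)" using IH rXs by simp
      then show ?thesis using cXs by simp
    next
      case True
      have "Supp C Fw w + (\<Sum>x\<in>Xs - {w}. Supp C Fw x) = (\<Sum>x\<in>Xs. Supp C Fw x)"
        using sum.remove[OF finXs True, of "Supp C Fw"] by simp
      also have "\<dots> \<le> NN C Bn Xs" unfolding Bn_def by (rule sum_Supp_le[OF FwF fin A'C Xs'(1)])
      finally have h1: "Supp C Fw w + (\<Sum>x\<in>Xs - {w}. Supp C Fw x) \<le> r * real (card Xs)" using rXs by simp
      have "real (card (Xs - {w})) * r \<le> (\<Sum>x\<in>Xs - {w}. Supp C Fw x)"
      proof (rule sum_bounded_below)
        fix x assume "x \<in> Xs - {w}"
        then have "x \<in> A'" using Xs'(1) by blast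
        then show "r \<le> Supp C Fw x" using Fwopt mr by fastforce
      qed
      moreover have "card Xs = Suc (card (Xs - {w}))" using card.remove[OF finXs True] .
      ultimately have "Supp C Fw w + real (card (Xs - {w})) * r \<le> r * (real (card (Xs - {w})) + 1)"
        using h1 by (simp add: algebra_simps)
      then show ?thesis using bsw by (simp add: algebra_simps)
    qed
    show ?case unfolding CeS
    proof (intro allI impI)
      fix Z assume Z: "Z \<subseteq> A'"
      have "\<beta> * real (card Z) \<le> r * real (card Z)" using br by (intro mult_right_mono) auto
      also have "\<dots> \<le> NN C Bn Z" by (rule rX[OF Z])
      finally show "\<beta> * real (card Z) \<le> NN C Bn Z" .
    qed
  qed
  have "\<beta> \<le> maxMin C B (Ce i \<union> {c})" by (rule mQ[OF le_refl HB[OF le_refl]])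
  then show ?thesis unfolding \<beta>_def E_def Ce_def by simp
qed


end
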